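(* Let $N\ge 3$, $b\ge 1$ an integer, $\gamma>0$, and let $C\in\mathbb{R}^{N\times N}$ be a circulant matrix with $C\mathbb{1}=0$ and $r=\operatorname{rank}(C)$. Consider the plant $\dot x=u+w$, $z=\begin{bmatrix}C\\0\end{bmatrix}x+\begin{bmatrix}0\\ \gamma I\end{bmatrix}u$ with $x,u,w\in\mathbb{R}^N$ (one scalar state per node of the ring $\mathbb{Z}_N$), in feedback with a state-feedback controller $u=Kx$, $K$ a proper rational $N\times N$ transfer matrix, with closed-loop maps $\Phi_x=(sI-K)^{-1}$, $\Phi_u=K(sI-K)^{-1}$ and closed loop $\mathcal{F}(P;K)=\begin{bmatrix}C\Phi_x\\ \gamma\Phi_u\end{bmatrix}$ from $w$ to $z$. If $r>2b+1$, then there is no controller $K$ such that simultaneously: $K\mathbb{1}=0$; $\Phi_x,\Phi_u$ are strictly proper; $\Phi_x,\Phi_u$ are TF-structured with respect to $\mathcal{A}^{(b)}$; and $\mathcal{F}(P;K)$ is stable (has finite $\mathcal{H}_2$ norm). Equivalently, every relative controller that is closed-loop TF-structured with respect to $\mathcal{A}^{(b)}$ yields an unstable $\mathcal{F}(P;K)$.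
   Context: $\mathbb{1}$ is the all-ones vector. $\mathcal{A}^{(b)}$ is the $N\times N$ 0/1 matrix with $\mathcal{A}^{(b)}_{ij}=1$ iff the circular distance $\min(|i-j|,N-|i-j|)$ is at most $b$ (nodes within $b$ hops on the ring with nearest-neighbor edges). A transfer matrix $\Phi$ is TF-structured with respect to $\mathcal{A}^{(b)}$ if $\Phi_{ij}(s)\equiv 0$ whenever $\mathcal{A}^{(b)}_{ij}=0$. *)

theory Defs
  imports "HOL-Computational_Algebra.Polynomial" "HOL-Computational_Algebra.Fraction_Field"
    "Jordan_Normal_Form.DL_Rank"
begin

(* Real rational transfer functions are elements of the field  real poly fract.
   An N x N (transfer) matrix is a function nat => nat => 'a, only entries i,j < N matter. *)

type_synonym tf = "real poly fract"

definition tf_const :: "real \<Rightarrow> tf" where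
  "tf_const c = Fract [:c:] 1"

definition tf_s :: tf where
  "tf_s = Fract [:0, 1:] 1"

definition proper_tf :: "tf \<Rightarrow> bool" where
  "proper_tf f \<longleftrightarrow> (\<exists>p q. q \<noteq> 0 \<and> f = Fract p q \<and> degree p \<le> degree q)"

definition strictly_proper_tf :: "tf \<Rightarrow> bool" where
  "strictly_proper_tf f \<longleftrightarrow> (\<exists>p q. q \<noteq> 0 \<and> f = Fract p q \<and> (p = 0 \<or> degree p < degree q))"

(* finite H2 norm of a scalar rational transfer function: strictly proper and all poles
   in the open left half plane *)
definition H2_stable_tf :: "tf \<Rightarrow> bool" where
  "H2_stable_tf f \<longleftrightarrow> (\<exists>p q. q \<noteq> 0 \<and> f = Fract p q \<and> (p = 0 \<or> degree p < degree q) \<and>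
      (\<forall>z::complex. poly (map_poly complex_of_real q) z = 0 \<longrightarrow> Re z < 0))"

definition circ_dist :: "nat \<Rightarrow> nat \<Rightarrow> nat \<Rightarrow> nat" where
  "circ_dist N i j = min (if j \<le> i then i - j else j - i) (N - (if j \<le> i then i - j else j - i))"

definition adjA :: "nat \<Rightarrow> nat \<Rightarrow> nat \<Rightarrow> nat \<Rightarrow> real" where
  "adjA N b i j = (if circ_dist N i j \<le> b then 1 else 0)"

definition TF_structured :: "nat \<Rightarrow> (nat \<Rightarrow> nat \<Rightarrow> real) \<Rightarrow> (nat \<Rightarrow> nat \<Rightarrow> tf) \<Rightarrow> bool" where
  "TF_structured N A Phi \<longleftrightarrow> (\<forall>i<N. \<forall>j<N. A i j = 0 \<longrightarrow> Phi i j = 0)"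

definition circulant :: "nat \<Rightarrow> (nat \<Rightarrow> nat \<Rightarrow> real) \<Rightarrow> bool" where
  "circulant N C \<longleftrightarrow> (\<forall>i<N. \<forall>j<N. C i j = C 0 ((j + N - i) mod N))"

definition mat_rank :: "nat \<Rightarrow> (nat \<Rightarrow> nat \<Rightarrow> real) \<Rightarrow> nat" where
  "mat_rank N C = vec_space.rank N (mat N N (\<lambda>(i, j). C i j))"

definition tf_mult :: "nat \<Rightarrow> (nat \<Rightarrow> nat \<Rightarrow> tf) \<Rightarrow> (nat \<Rightarrow> nat \<Rightarrow> tf) \<Rightarrow> nat \<Rightarrow> nat \<Rightarrow> tf" where
  "tf_mult N A B i j = (\<Sum>k<N. A i k * B k j)"

definition tf_id :: "nat \<Rightarrow> nat \<Rightarrow> tf" where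
  "tf_id i j = (if i = j then 1 else 0)"

definition tf_inverse :: "nat \<Rightarrow> (nat \<Rightarrow> nat \<Rightarrow> tf) \<Rightarrow> (nat \<Rightarrow> nat \<Rightarrow> tf) \<Rightarrow> bool" where
  "tf_inverse N M Phi \<longleftrightarrow> (\<forall>i<N. \<forall>j<N. tf_mult N M Phi i j = tf_id i j \<and> tf_mult N Phi M i j = tf_id i j)"

definition sI_minus :: "(nat \<Rightarrow> nat \<Rightarrow> tf) \<Rightarrow> nat \<Rightarrow> nat \<Rightarrow> tf" where
  "sI_minus K i j = (if i = j then tf_s else 0) - K i j"

end

theory Submission
  imports Defs "HOL-Number_Theory.Cong"
begin

lemma rec_zero:
  fixes y u :: "nat \<Rightarrow> real" and e N :: nat
  assumes ue: "u e \<noteq> 0"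
    and rec: "\<And>t. e \<le> t \<Longrightarrow> t < N \<Longrightarrow> (\<Sum>d\<le>e. u d * y (t-d)) = 0"
    and last: "\<And>i. N - e \<le> i \<Longrightarrow> i < N \<Longrightarrow> y i = 0"
  shows "m < N \<Longrightarrow> y m = 0"
proof (induction "N - m" arbitrary: m rule: less_induct)
  case less
  show ?case
  proof (cases "N - e \<le> m")
    case True then show ?thesis using last less by auto
  next
    case False
    hence t: "e \<le> m + e" "m + e < N" by auto
    have "(\<Sum>d\<le>e. u d * y (m + e - d)) = 0" using rec[OF t] .
    also have "(\<Sum>d\<le>e. u d * y (m + e - d)) = (\<Sum>d\<in>{..<e}. u d * y (m + e - d)) + u e * y m"
      by (simp add: lessThan_Suc_atMost[symmetric])
    also have "(\<Sum>d\<in>{..<e}. u d * y (m + e - d)) = 0"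
    proof (rule sum.neutral, intro ballI)
      fix d assume d: "d \<in> {..<e}"
      have "y (m + e - d) = 0" using less.hyps[of "m + e - d"] d t by auto
      thus "u d * y (m + e - d) = 0" by simp
    qed
    finally show ?thesis using ue by simp
  qed
qed


lemma wide_kernel:
  fixes P :: "real mat"
  assumes P: "P \<in> carrier_mat e m" and em: "e < m"
  shows "\<exists>v. v \<in> carrier_vec m \<and> v \<noteq> 0\<^sub>v m \<and> P *\<^sub>v v = 0\<^sub>v e"
proof (cases "distinct (cols P)")
  case True
  interpret vec_space "TYPE(real)" e .
  have card: "card (set (cols P)) = m" using True P distinct_card by fastforce
  have sub: "set (cols P) \<subseteq> carrier_vec e" using P cols_dim by (metis carrier_matD(1))
  have "\<not> lin_indpt (set (cols P))"
  proof
    assume "lin_indpt (set (cols P))"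
    from li_le_dim(2)[OF fin_dim _ this] sub have "card (set (cols P)) \<le> dim" by simp
    with card dim_is_n em show False by simp
  qed
  then obtain v where "v \<in> carrier_vec m" "v \<noteq> 0\<^sub>v m" "P *\<^sub>v v = 0\<^sub>v e"
    using lin_depE[OF P _ True] by blast
  then show ?thesis by blast
next
  case False
  then obtain i j where ij: "i < length (cols P)" "j < length (cols P)" "i \<noteq> j" "cols P ! i = cols P ! j"
    using distinct_conv_nth by blast
  hence ij': "i < m" "j < m" using P by auto
  define v :: "real vec" where "v = unit_vec m i - unit_vec m j"
  have vc: "v \<in> carrier_vec m" unfolding v_def by simp
  have "v $ i = 1" unfolding v_def using ij ij' by simp
  hence "v \<noteq> 0\<^sub>v m" using ij' by auto
  moreover have "P *\<^sub>v v = 0\<^sub>v e"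
  proof -
    have ci: "col P i = col P j" using ij P by auto
    show ?thesis
    proof (rule eq_vecI)
      fix k assume "k < dim_vec (0\<^sub>v e :: real vec)"
      hence k: "k < e" by simp
      have "(P *\<^sub>v v) $ k = row P k \<bullet> v" using P k by simp
      also have "\<dots> = row P k \<bullet> unit_vec m i - row P k \<bullet> unit_vec m j"
        unfolding v_def using P k by (intro scalar_prod_minus_distrib[of _ m], auto simp: row_def)
      also have "\<dots> = P $$ (k, i) - P $$ (k, j)" using P k ij' by simp
      also have "\<dots> = 0" using ci P k ij' by (metis col_def index_vec carrier_matD(1) right_minus_eq)
      finally show "(P *\<^sub>v v) $ k = 0\<^sub>v e $ k" using k by simp
    qed (use P in simp)
  qed
  ultimately show ?thesis using vc by blast
qed


lemma rank_le_rec: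
  fixes C :: "nat \<Rightarrow> nat \<Rightarrow> real" and u :: "nat \<Rightarrow> real"
  assumes ue: "u e \<noteq> 0"
    and rec: "\<And>l t. l < N \<Longrightarrow> e \<le> t \<Longrightarrow> t < N \<Longrightarrow> (\<Sum>d\<le>e. u d * C (t-d) l) = 0"
  shows "vec_space.rank N (mat N N (\<lambda>(i,j). C i j)) \<le> e"
proof -
  interpret vec_space "TYPE(real)" N .
  define A where "A = mat N N (\<lambda>(i,j). C i j)"
  have A: "A \<in> carrier_mat N N" unfolding A_def by simp
  obtain S where max: "maximal S (\<lambda>T. T \<subseteq> set (cols A) \<and> lin_indpt T)"
    using maximal_exists[of "(\<lambda>T. T \<subseteq> set (cols A) \<and> lin_indpt T)" "card (set (cols A))" "{}"]
    by (meson List.finite_set card_mono empty_iff empty_subsetI finite_lin_indpt2 rev_finite_subset)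
  have rk: "rank A = card S" using rank_card_indpt[OF A max] .
  have SA: "S \<subseteq> set (cols A)" and Sli: "lin_indpt S" using max unfolding maximal_def by auto
  have finS: "finite S" using SA finite_subset by blast
  show ?thesis
  proof (rule ccontr)
    assume "\<not> ?thesis"
    hence eS: "e < card S" using rk A_def by simp
    obtain Sl where Sl: "distinct Sl" "set Sl = S" using finite_distinct_list[OF finS] by blast
    define m where "m = length Sl"
    have mS: "m = card S" unfolding m_def using Sl distinct_card by fastforce
    have SlN: "set Sl \<subseteq> carrier_vec N" using SA Sl A cols_dim by (metis carrier_matD(1) subset_trans)
    define A1 where "A1 = mat_of_cols N Sl"
    have A1: "A1 \<in> carrier_mat N m" unfolding A1_def m_def by simp
    have cA1: "cols A1 = Sl" unfolding A1_def using SlN by simp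
    have colsl: "\<exists>l<N. \<forall>i<N. Sl ! j $ i = C i l" if j: "j < m" for j
    proof -
      have "Sl ! j \<in> set (cols A)" using SA Sl j m_def by auto
      then obtain l where l: "l < N" "Sl ! j = col A l"
        by (metis A carrier_matD(2) cols_length cols_nth in_set_conv_nth)
      show ?thesis using l A_def by (intro exI[of _ l]) auto
    qed
    define P where "P = mat e m (\<lambda>(i,j). A1 $$ (N - e + i, j))"
    have P: "P \<in> carrier_mat e m" unfolding P_def by simp
    obtain v where v: "v \<in> carrier_vec m" "v \<noteq> 0\<^sub>v m" "P *\<^sub>v v = 0\<^sub>v e"
      using wide_kernel[OF P] eS mS by auto
    define y where "y = A1 *\<^sub>v v"
    have yi: "y $ i = (\<Sum>j<m. Sl ! j $ i * v $ j)" if i: "i < N" for i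
    proof -
      have "y $ i = row A1 i \<bullet> v" unfolding y_def using A1 i by simp
      also have "\<dots> = (\<Sum>j<m. A1 $$ (i, j) * v $ j)"
        unfolding scalar_prod_def using v A1 i by (auto simp: lessThan_atLeast0)
      also have "\<dots> = (\<Sum>j<m. Sl ! j $ i * v $ j)"
        unfolding A1_def m_def using i by (simp add: mat_of_cols_index)
      finally show ?thesis .
    qed
    have "y $ i = 0" if i: "i < N" for i
    proof (rule rec_zero[where u = u and e = e and N = N and y = "\<lambda>i. y $ i", OF ue _ _ i])
      fix t assume t: "e \<le> t" "t < N"
      have "(\<Sum>d\<le>e. u d * y $ (t - d)) = (\<Sum>d\<le>e. \<Sum>j<m. u d * (Sl ! j $ (t - d) * v $ j))"
        using t by (simp add: yi sum_distrib_left)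
      also have "\<dots> = (\<Sum>j<m. \<Sum>d\<le>e. u d * (Sl ! j $ (t - d) * v $ j))"
        by (rule sum.swap)
      also have "\<dots> = (\<Sum>j<m. (\<Sum>d\<le>e. u d * Sl ! j $ (t - d)) * v $ j)"
        by (simp add: sum_distrib_right mult.assoc)
      also have "\<dots> = 0"
      proof (rule sum.neutral, intro ballI)
        fix j assume "j \<in> {..<m}"
        then obtain l where l: "l < N" "\<forall>i<N. Sl ! j $ i = C i l" using colsl by blast
        have "(\<Sum>d\<le>e. u d * Sl ! j $ (t - d)) = (\<Sum>d\<le>e. u d * C (t - d) l)"
          using l t by (intro sum.cong) auto
        also have "\<dots> = 0" using rec[OF l(1) t] .
        finally show "(\<Sum>d\<le>e. u d * Sl ! j $ (t - d)) * v $ j = 0" by simp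
      qed
      finally show "(\<Sum>d\<le>e. u d * y $ (t - d)) = 0" .
    next
      fix i assume i: "N - e \<le> i" "i < N"
      have "(P *\<^sub>v v) $ (i - (N - e)) = 0" using v(3) i by simp
      moreover have "(P *\<^sub>v v) $ (i - (N - e)) = row P (i - (N - e)) \<bullet> v" using P i by simp
      moreover have "row P (i - (N - e)) = row A1 i" using i P A1
        by (intro eq_vecI) (auto simp: P_def)
      moreover have "y $ i = row A1 i \<bullet> v" unfolding y_def using A1 i by simp
      ultimately show "y $ i = 0" by simp
    qed
    hence "A1 *\<^sub>v v = 0\<^sub>v N" using A1 unfolding y_def by (intro eq_vecI) auto
    hence "lin_dep (set (cols A1))" using lin_depI[OF A1 v(1) v(2)] cA1 Sl by auto
    thus False using Sli cA1 Sl by simp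
  qed
qed


lemma window_cover:
  fixes N b j0 k :: nat
  assumes "k < N" "j0 < N" "circ_dist N k j0 \<le> b" "b \<le> N"
  shows "\<exists>d\<le>2*b. k = (j0 + N - b + d) mod N"
proof -
  consider "j0 \<le> k" "k - j0 \<le> b" | "j0 \<le> k" "N - (k - j0) \<le> b" | "k < j0" "j0 - k \<le> b" | "k < j0" "N - (j0 - k) \<le> b"
    using assms(3) unfolding circ_dist_def by (cases "j0 \<le> k") (auto simp: min_def split: if_splits)
  then show ?thesis
  proof cases
    case 1 thus ?thesis using assms by (intro exI[of _ "k - j0 + b"]) auto
  next
    case 2 thus ?thesis using assms by (intro exI[of _ "b - (N - k + j0)"]) auto
  next
    case 3 thus ?thesis using assms by (intro exI[of _ "b - (j0 - k)"]) auto
  next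
    case 4
    have "j0 + N - b + (b + N - j0 + k) = k + N * 2" using 4 assms by auto
    thus ?thesis using 4 assms by (intro exI[of _ "b + N - j0 + k"]) auto
  qed
qed

lemma window_inj:
  fixes N X :: nat
  shows "B < N \<Longrightarrow> inj_on (\<lambda>d. (X + d) mod N) {..B}"
proof (rule inj_onI)
  fix x y assume B: "B < N" and xy: "x \<in> {..B}" "y \<in> {..B}" and eq: "(X + x) mod N = (X + y) mod N"
  have "[X + x = X + y] (mod N)" using eq unfolding cong_def .
  hence "[x = y] (mod N)" by (simp add: cong_add_lcancel_nat)
  thus "x = y" using xy B by (simp add: cong_def)
qed


lemma mat_rank_le_N: "mat_rank N C \<le> N"
proof -
  interpret vec_space "TYPE(real)" N .
  show ?thesis unfolding mat_rank_def by (rule rank_le_nc[of _ N]) simp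
qed

lemma circ_cc:
  assumes circ: "circulant N C" and i: "i < N" and j: "j < N"
  shows "C i j = C 0 (nat ((int j - int i) mod int N))"
proof -
  have "C i j = C 0 ((j + N - i) mod N)" using circ i j unfolding circulant_def by blast
  moreover have "int ((j + N - i) mod N) = (int j - int i) mod int N"
  proof -
    have "int ((j + N - i) mod N) = (int j + int N - int i) mod int N"
      using i by (simp add: of_nat_mod of_nat_diff)
    also have "\<dots> = (int j - int i) mod int N"
      by (metis add.commute add_diff_eq mod_add_self1)
    finally show ?thesis .
  qed
  ultimately show ?thesis by (metis nat_int)
qed

lemma banded_kernel_zero:
  fixes N b j0 :: nat and C :: "nat \<Rightarrow> nat \<Rightarrow> real" and w :: "nat \<Rightarrow> real"
  assumes circ: "circulant N C" and rk: "mat_rank N C > 2*b+1" and j0: "j0 < N"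
    and band: "\<And>k. k < N \<Longrightarrow> b < circ_dist N k j0 \<Longrightarrow> w k = 0"
    and ker: "\<And>i. i < N \<Longrightarrow> (\<Sum>k<N. C i k * w k) = 0"
    and k: "k < N"
  shows "w k = 0"
proof (rule ccontr)
  assume wk: "w k \<noteq> 0"
  have bN: "2*b < N" "b \<le> N" using mat_rank_le_N[of N C] rk by auto
  define kd where "kd d = (j0 + N - b + d) mod N" for d
  define u where "u d = (if d \<le> 2*b then w (kd d) else 0)" for d
  define cc where "cc m = C 0 (nat (m mod int N))" for m
  have Ccc: "C i j = cc (int j - int i)" if "i < N" "j < N" for i j
    using circ_cc[OF circ that] unfolding cc_def .
  have kdN: "kd d < N" for d unfolding kd_def using bN by simp
  have cover: "\<exists>d\<le>2*b. k' = kd d" if "k' < N" "w k' \<noteq> 0" for k'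
    using window_cover[OF that(1) j0 _ bN(2)] band that unfolding kd_def by force
  have reidx: "(\<Sum>k<N. f k * w k) = (\<Sum>d\<le>2*b. f (kd d) * u d)" for f
  proof -
    have "(\<Sum>k<N. f k * w k) = (\<Sum>k\<in>kd ` {..2*b}. f k * w k)"
    proof (rule sum.mono_neutral_right)
      show "kd ` {..2*b} \<subseteq> {..<N}" using kdN by auto
      show "\<forall>i\<in>{..<N} - kd ` {..2*b}. f i * w i = 0"
      proof
        fix i assume "i \<in> {..<N} - kd ` {..2*b}"
        thus "f i * w i = 0" using cover[of i] by (cases "w i = 0") auto
      qed
    qed simp
    also have "\<dots> = (\<Sum>d\<le>2*b. f (kd d) * w (kd d))"
      using window_inj[OF bN(1)] unfolding kd_def by (subst sum.reindex) auto
    also have "\<dots> = (\<Sum>d\<le>2*b. f (kd d) * u d)" unfolding u_def by simp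
    finally show ?thesis .
  qed
  obtain d0 where d0: "d0 \<le> 2*b" "u d0 \<noteq> 0" using cover[OF k wk] wk u_def by auto
  define D where "D = {d. d \<le> 2*b \<and> u d \<noteq> 0}"
  have finD: "finite D" unfolding D_def by simp
  define e where "e = Max D"
  have eD: "e \<in> D" unfolding e_def using finD d0 D_def by (intro Max_in) auto
  hence ue: "u e \<noteq> 0" and e2b: "e \<le> 2*b" unfolding D_def by auto
  have uz: "u d = 0" if "e < d" for d
  proof (rule ccontr)
    assume "u d \<noteq> 0"
    hence "d \<in> D" unfolding D_def u_def by (auto split: if_splits)
    hence "d \<le> e" unfolding e_def using finD by simp
    thus False using that by simp
  qed
  have rec: "(\<Sum>d\<le>e. u d * C (t-d) l) = 0" if l: "l < N" and t: "e \<le> t" "t < N" for l t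
  proof -
    have "(\<Sum>d\<le>e. u d * C (t-d) l) = (\<Sum>d\<le>e. u d * cc (int l - int t + int d))"
      using l t by (intro sum.cong refl) (auto simp: Ccc of_nat_diff algebra_simps)
    also have "\<dots> = (\<Sum>d\<le>2*b. u d * cc (int l - int t + int d))"
      using e2b uz by (intro sum.mono_neutral_left) auto
    also have "\<dots> = 0"
    proof -
      define i where "i = nat ((int t - int l + int j0 - int b) mod int N)"
      have iN: "i < N" unfolding i_def using bN t by (simp add: nat_less_iff)
      have "0 = (\<Sum>k<N. C i k * w k)" using ker[OF iN] by simp
      also have "\<dots> = (\<Sum>d\<le>2*b. C i (kd d) * u d)" by (rule reidx)
      also have "\<dots> = (\<Sum>d\<le>2*b. u d * cc (int l - int t + int d))"
      proof (intro sum.cong refl)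
        fix d assume "d \<in> {..2*b}"
        have "C i (kd d) = cc (int (kd d) - int i)" using Ccc iN kdN by blast
        also have "\<dots> = cc (int l - int t + int d)"
        proof -
          have a: "int (kd d) = (int j0 + int N - int b + int d) mod int N"
            unfolding kd_def using bN by (simp add: of_nat_mod of_nat_diff algebra_simps)
          have b: "int i = (int t - int l + int j0 - int b) mod int N"
            unfolding i_def using bN by simp
          have "(int (kd d) - int i) mod int N
              = ((int j0 + int N - int b + int d) - (int t - int l + int j0 - int b)) mod int N"
            unfolding a b by (simp add: mod_diff_eq)
          also have "\<dots> = (int l - int t + int d + int N) mod int N" by (simp add: algebra_simps)
          also have "\<dots> = (int l - int t + int d) mod int N" by simp
          finally show ?thesis unfolding cc_def by simp
        qed
        finally show "C i (kd d) * u d = u d * cc (int l - int t + int d)" by simp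
      qed
      finally show ?thesis by simp
    qed
    finally show ?thesis .
  qed
  have "vec_space.rank N (mat N N (\<lambda>(i,j). C i j)) \<le> e"
    by (rule rank_le_rec[OF ue rec])
  hence "mat_rank N C \<le> e" unfolding mat_rank_def .
  thus False using rk e2b by simp
qed


definition ok0 :: "tf \<Rightarrow> bool" where
  "ok0 f \<longleftrightarrow> (\<exists>p q. poly q 0 \<noteq> 0 \<and> f = Fract p q)"

definition ev0 :: "tf \<Rightarrow> real" where
  "ev0 f = (THE v. \<exists>p q. poly q 0 \<noteq> 0 \<and> f = Fract p q \<and> v = poly p 0 / poly q 0)"

lemma ev0_Fract:
  assumes q: "poly q 0 \<noteq> 0"
  shows "ev0 (Fract p q) = poly p 0 / poly q 0"
  unfolding ev0_def
proof (rule the_equality)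
  show "\<exists>p' q'. poly q' 0 \<noteq> 0 \<and> Fract p q = Fract p' q' \<and> poly p 0 / poly q 0 = poly p' 0 / poly q' 0"
    using q by blast
next
  fix v assume "\<exists>p' q'. poly q' 0 \<noteq> 0 \<and> Fract p q = Fract p' q' \<and> v = poly p' 0 / poly q' 0"
  then obtain p' q' where pq: "poly q' 0 \<noteq> 0" "Fract p q = Fract p' q'" "v = poly p' 0 / poly q' 0" by blast
  have "q \<noteq> 0" "q' \<noteq> 0" using q pq(1) by auto
  hence "p * q' = p' * q" using pq(2) eq_fract(1) by blast
  hence "poly p 0 * poly q' 0 = poly p' 0 * poly q 0" by (metis poly_mult)
  thus "v = poly p 0 / poly q 0" using pq q by (simp add: frac_eq_eq)
qed

lemma ok0_add: "ok0 f \<Longrightarrow> ok0 g \<Longrightarrow> ok0 (f + g) \<and> ev0 (f + g) = ev0 f + ev0 g"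
proof -
  assume "ok0 f" "ok0 g"
  then obtain p q p' q' where a: "poly q 0 \<noteq> 0" "f = Fract p q" "poly q' 0 \<noteq> 0" "g = Fract p' q'"
    unfolding ok0_def by blast
  hence nz: "q \<noteq> 0" "q' \<noteq> 0" by auto
  have fg: "f + g = Fract (p * q' + p' * q) (q * q')" using a nz by simp
  have "poly (q * q') 0 \<noteq> 0" using a by simp
  hence "ok0 (f + g)" unfolding ok0_def fg by blast
  thus ?thesis using fg a \<open>poly (q * q') 0 \<noteq> 0\<close> by (auto simp: ev0_Fract field_simps)
qed

lemma ok0_mult: "ok0 f \<Longrightarrow> ok0 g \<Longrightarrow> ok0 (f * g) \<and> ev0 (f * g) = ev0 f * ev0 g"
proof -
  assume "ok0 f" "ok0 g"
  then obtain p q p' q' where a: "poly q 0 \<noteq> 0" "f = Fract p q" "poly q' 0 \<noteq> 0" "g = Fract p' q'"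
    unfolding ok0_def by blast
  have fg: "f * g = Fract (p * p') (q * q')" using a by simp
  have "poly (q * q') 0 \<noteq> 0" using a by simp
  hence "ok0 (f * g)" unfolding ok0_def fg by blast
  thus ?thesis using fg a \<open>poly (q * q') 0 \<noteq> 0\<close> by (auto simp: ev0_Fract field_simps)
qed

lemma ok0_const: "ok0 (tf_const c) \<and> ev0 (tf_const c) = c"
  unfolding ok0_def tf_const_def by (auto simp: ev0_Fract) (rule exI[of _ "[:c:]"], rule exI[of _ 1], simp)

lemma ok0_s: "ok0 tf_s \<and> ev0 tf_s = 0"
  unfolding ok0_def tf_s_def by (auto simp: ev0_Fract) (rule exI[of _ "[:0,1:]"], rule exI[of _ 1], simp)

lemma ok0_zero: "ok0 0 \<and> ev0 0 = 0"
  unfolding ok0_def Zero_fract_def by (auto simp: ev0_Fract) (rule exI[of _ 0], rule exI[of _ 1], simp)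

lemma ok0_one: "ok0 1 \<and> ev0 1 = 1"
  unfolding ok0_def One_fract_def by (auto simp: ev0_Fract) (rule exI[of _ 1], rule exI[of _ 1], simp)

lemma ok0_sum: "(\<And>x. x \<in> A \<Longrightarrow> ok0 (f x)) \<Longrightarrow> ok0 (sum f A) \<and> ev0 (sum f A) = (\<Sum>x\<in>A. ev0 (f x))"
proof (induction A rule: infinite_finite_induct)
  case (infinite A) thus ?case using ok0_zero by simp
next
  case empty thus ?case using ok0_zero by simp
next
  case (insert x F) thus ?case using ok0_add[of "f x" "sum f F"] by simp
qed

lemma H2_ok0: "H2_stable_tf f \<Longrightarrow> ok0 f"
proof -
  assume "H2_stable_tf f"
  then obtain p q where pq: "q \<noteq> 0" "f = Fract p q"
    "\<forall>z::complex. poly (map_poly complex_of_real q) z = 0 \<longrightarrow> Re z < 0"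
    unfolding H2_stable_tf_def by blast
  have "poly (map_poly complex_of_real q) 0 \<noteq> 0" using pq(3) by force
  hence "poly q 0 \<noteq> 0" by (auto simp: poly_0_coeff_0 coeff_map_poly)
  thus ?thesis unfolding ok0_def using pq by blast
qed


lemma tf_const_mult: "tf_const a * tf_const b = tf_const (a * b)"
  unfolding tf_const_def by (simp add: mult.commute)

lemma tf_const_one: "tf_const 1 = 1"
  unfolding tf_const_def One_fract_def by (simp add: one_pCons)

lemma ok0_tf_id: "ok0 (tf_id i j) \<and> ev0 (tf_id i j) = (if i = j then 1 else 0)"
  unfolding tf_id_def using ok0_one ok0_zero by auto

theorem theorem2:
  fixes N b :: nat and \<gamma> :: real and C :: "nat \<Rightarrow> nat \<Rightarrow> real"
  assumes "N \<ge> 3" and "b \<ge> 1" and "\<gamma> > 0"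
    and "circulant N C"
    and "\<forall>i<N. (\<Sum>j<N. C i j) = 0"
    and "mat_rank N C > 2 * b + 1"
  shows "\<not> (\<exists>K Phi_x Phi_u :: nat \<Rightarrow> nat \<Rightarrow> tf.
            (\<forall>i<N. \<forall>j<N. proper_tf (K i j))
          \<and> tf_inverse N (sI_minus K) Phi_x
          \<and> (\<forall>i<N. \<forall>j<N. Phi_u i j = tf_mult N K Phi_x i j)
          \<and> (\<forall>i<N. (\<Sum>j<N. K i j) = 0)
          \<and> (\<forall>i<N. \<forall>j<N. strictly_proper_tf (Phi_x i j) \<and> strictly_proper_tf (Phi_u i j))
          \<and> TF_structured N (adjA N b) Phi_x
          \<and> TF_structured N (adjA N b) Phi_u
          \<and> (\<forall>i<N. \<forall>j<N. H2_stable_tf (\<Sum>k<N. tf_const (C i k) * Phi_x k j))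
          \<and> (\<forall>i<N. \<forall>j<N. H2_stable_tf (tf_const \<gamma> * Phi_u i j)))"
proof
  assume "\<exists>K Phi_x Phi_u :: nat \<Rightarrow> nat \<Rightarrow> tf.
            (\<forall>i<N. \<forall>j<N. proper_tf (K i j))
          \<and> tf_inverse N (sI_minus K) Phi_x
          \<and> (\<forall>i<N. \<forall>j<N. Phi_u i j = tf_mult N K Phi_x i j)
          \<and> (\<forall>i<N. (\<Sum>j<N. K i j) = 0)
          \<and> (\<forall>i<N. \<forall>j<N. strictly_proper_tf (Phi_x i j) \<and> strictly_proper_tf (Phi_u i j))
          \<and> TF_structured N (adjA N b) Phi_x
          \<and> TF_structured N (adjA N b) Phi_u
          \<and> (\<forall>i<N. \<forall>j<N. H2_stable_tf (\<Sum>k<N. tf_const (C i k) * Phi_x k j))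
          \<and> (\<forall>i<N. \<forall>j<N. H2_stable_tf (tf_const \<gamma> * Phi_u i j))"
  then obtain K X U :: "nat \<Rightarrow> nat \<Rightarrow> tf" where
    inv: "tf_inverse N (sI_minus K) X"
    and Udef: "\<forall>i<N. \<forall>j<N. U i j = tf_mult N K X i j"
    and Ksum: "\<forall>i<N. (\<Sum>j<N. K i j) = 0"
    and TFu: "TF_structured N (adjA N b) U"
    and H2x: "\<forall>i<N. \<forall>j<N. H2_stable_tf (\<Sum>k<N. tf_const (C i k) * X k j)"
    and H2u: "\<forall>i<N. \<forall>j<N. H2_stable_tf (tf_const \<gamma> * U i j)"
    by blast
  have N0: "0 < N" using assms(1) by simp
  have sX: "tf_s * X i j = U i j + tf_id i j" if ij: "i < N" "j < N" for i j
  proof -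
    have "tf_id i j = tf_mult N (sI_minus K) X i j" using inv ij unfolding tf_inverse_def by simp
    also have "\<dots> = (\<Sum>k<N. (if i = k then tf_s else 0) * X k j) - (\<Sum>k<N. K i k * X k j)"
      unfolding tf_mult_def sI_minus_def by (simp add: left_diff_distrib sum_subtractf)
    also have "(\<Sum>k<N. (if i = k then tf_s else 0) * X k j) = (\<Sum>k<N. if i = k then tf_s * X i j else 0)"
      by (intro sum.cong refl) simp
    also have "\<dots> = tf_s * X i j" using ij by simp
    also have "(\<Sum>k<N. K i k * X k j) = U i j" using ij Udef unfolding tf_mult_def by simp
    finally show ?thesis by (simp add: algebra_simps)
  qed
  have rowX: "tf_s * (\<Sum>j<N. X i j) = 1" if i: "i < N" for i
  proof -
    have "1 = (\<Sum>j<N. tf_id i j)" using i unfolding tf_id_def by simp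
    also have "\<dots> = (\<Sum>j<N. tf_mult N X (sI_minus K) i j)" using inv i unfolding tf_inverse_def by simp
    also have "\<dots> = (\<Sum>j<N. \<Sum>k<N. X i k * sI_minus K k j)"
      unfolding tf_mult_def by simp
    also have "\<dots> = (\<Sum>k<N. \<Sum>j<N. X i k * sI_minus K k j)"
      by (rule sum.swap)
    also have "\<dots> = (\<Sum>k<N. X i k * (\<Sum>j<N. sI_minus K k j))"
      by (simp add: sum_distrib_left)
    also have "\<dots> = (\<Sum>k<N. X i k * tf_s)"
    proof (intro sum.cong refl)
      fix k assume k: "k \<in> {..<N}"
      have "(\<Sum>j<N. sI_minus K k j) = (\<Sum>j<N. if k = j then tf_s else 0) - (\<Sum>j<N. K k j)"
        unfolding sI_minus_def by (simp add: sum_subtractf)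
      also have "\<dots> = tf_s" using k Ksum by simp
      finally show "X i k * (\<Sum>j<N. sI_minus K k j) = X i k * tf_s" by simp
    qed
    finally show ?thesis by (simp add: sum_distrib_left mult.commute)
  qed
  have okU: "ok0 (U i j)" if ij: "i < N" "j < N" for i j
  proof -
    have "U i j = tf_const (1/\<gamma>) * (tf_const \<gamma> * U i j)"
      using assms(3) by (simp add: mult.assoc[symmetric] tf_const_mult tf_const_one)
    thus ?thesis using ok0_mult[OF ok0_const[THEN conjunct1] H2_ok0] H2u ij by metis
  qed
  define W where "W k j = ev0 (U k j) + (if k = j then 1 else 0)" for k j
  have ker: "(\<Sum>k<N. C i k * W k j) = 0" if ij: "i < N" "j < N" for i j
  proof -
    define Y where "Y = (\<Sum>k<N. tf_const (C i k) * X k j)"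
    have okY: "ok0 Y" unfolding Y_def using H2x ij H2_ok0 by blast
    have "tf_s * Y = (\<Sum>k<N. tf_const (C i k) * (U k j + tf_id k j))"
      unfolding Y_def sum_distrib_left using ij sX by (intro sum.cong refl) (simp add: mult.left_commute)
    moreover have "ev0 (tf_s * Y) = 0" using ok0_mult[OF ok0_s[THEN conjunct1] okY] ok0_s by simp
    moreover have "ev0 (\<Sum>k<N. tf_const (C i k) * (U k j + tf_id k j)) = (\<Sum>k<N. C i k * W k j)"
    proof -
      have ok: "ok0 (tf_const (C i k) * (U k j + tf_id k j)) \<and>
          ev0 (tf_const (C i k) * (U k j + tf_id k j)) = C i k * W k j" if k: "k < N" for k
        using ok0_mult[OF ok0_const[THEN conjunct1] ok0_add[OF okU[OF k ij(2)] ok0_tf_id[THEN conjunct1], THEN conjunct1]]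
          ok0_add[OF okU[OF k ij(2)] ok0_tf_id[THEN conjunct1]] ok0_const ok0_tf_id
        unfolding W_def by simp
      show ?thesis using ok0_sum[of "{..<N}" "\<lambda>k. tf_const (C i k) * (U k j + tf_id k j)"] ok by simp
    qed
    ultimately show ?thesis by simp
  qed
  have band: "W k j = 0" if "k < N" "j < N" "b < circ_dist N k j" for k j
  proof -
    have "adjA N b k j = 0" using that unfolding adjA_def by simp
    hence "U k j = 0" using TFu that unfolding TF_structured_def by blast
    moreover have "k \<noteq> j" using that unfolding circ_dist_def by auto
    ultimately show ?thesis unfolding W_def using ok0_zero by simp
  qed
  have Wz: "W k j = 0" if "k < N" "j < N" for k j
    using banded_kernel_zero[OF assms(4) assms(6) that(2), of "\<lambda>k. W k j"] band ker that by blast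
  have "tf_s * (\<Sum>j<N. X 0 j) = (\<Sum>j<N. U 0 j + tf_id 0 j)"
    unfolding sum_distrib_left using N0 sX by simp
  hence eq1: "(\<Sum>j<N. U 0 j + tf_id 0 j) = 1" using rowX[OF N0] by simp
  have "ev0 (\<Sum>j<N. U 0 j + tf_id 0 j) = (\<Sum>j<N. W 0 j)"
  proof -
    have ok: "ok0 (U 0 j + tf_id 0 j) \<and> ev0 (U 0 j + tf_id 0 j) = W 0 j" if j: "j < N" for j
      using ok0_add[OF okU[OF N0 j] ok0_tf_id[THEN conjunct1]] ok0_tf_id unfolding W_def by simp
    show ?thesis using ok0_sum[of "{..<N}" "\<lambda>j. U 0 j + tf_id 0 j"] ok by simp
  qed
  also have "\<dots> = 0" using Wz N0 by simp
  finally show False using eq1 ok0_one by simp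
qed

end
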